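(* Let $S$ be a finite nonempty set of positive integers, $s=\max S$, and $r\ge 1$ an integer. The minimum density of an $r$-identifying code in the distance graph $G(S)$ is achieved by a periodic set with period at most $(6sr)2^{6sr}$.
   Context: The distance graph $G(S)$ has vertex set $\mathbb{Z}$, with $i,j$ adjacent iff $|i-j|\in S$. For a vertex $u$, $B_r(u)$ is the set of vertices at graph distance at most $r$ from $u$ in $G(S)$. A set $A\subseteq\mathbb{Z}$ is an $r$-identifying code if for every pair of distinct vertices $u,v$, the sets $A\cap B_r(u)$ and $A\cap B_r(v)$ are nonempty and distinct. The density of $A$ is $\delta(A)=\limsup_{N\to\infty}\frac{|A\cap[-N,N]|}{2N+1}$. A set $A$ is periodic with period $p$ if $A+p=A$. *)

theory Defs
  imports Complex_Main "HOL-Library.Extended_Real" "HOL-Library.Liminf_Limsup"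
begin

definition dg_adj :: "nat set \<Rightarrow> int \<Rightarrow> int \<Rightarrow> bool" where
  "dg_adj S i j \<longleftrightarrow> nat \<bar>i - j\<bar> \<in> S"

fun dg_ball :: "nat set \<Rightarrow> nat \<Rightarrow> int \<Rightarrow> int set" where
  "dg_ball S 0 u = {u}"
| "dg_ball S (Suc r) u = dg_ball S r u \<union> {w. \<exists>v\<in>dg_ball S r u. dg_adj S v w}"

definition r_identifying_code :: "nat set \<Rightarrow> nat \<Rightarrow> int set \<Rightarrow> bool" where
  "r_identifying_code S r A \<longleftrightarrow>
     (\<forall>u v. u \<noteq> v \<longrightarrow>
        A \<inter> dg_ball S r u \<noteq> {} \<and> A \<inter> dg_ball S r v \<noteq> {} \<and>
        A \<inter> dg_ball S r u \<noteq> A \<inter> dg_ball S r v)"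

definition density :: "int set \<Rightarrow> ereal" where
  "density A = limsup (\<lambda>N::nat. ereal (real (card (A \<inter> {- int N .. int N})) / (2 * real N + 1)))"

definition periodic_with :: "int set \<Rightarrow> nat \<Rightarrow> bool" where
  "periodic_with A p \<longleftrightarrow> (\<lambda>x. x + int p) ` A = A"

end

theory Submission
  imports Defs
begin


lemma adj_shift: "dg_adj S (v+t) (w+t) = dg_adj S v w"
  by (simp add: dg_adj_def)

lemma ball_shift: "dg_ball S r (u+t) = (\<lambda>x. x+t) ` dg_ball S r u"
proof (induction r)
  case 0 then show ?case by simp
next
  case (Suc r)
  show ?case
  proof (rule set_eqI, rule iffI)
    fix y assume "y \<in> dg_ball S (Suc r) (u+t)"
    then consider "y \<in> dg_ball S r (u+t)" | v where "v \<in> dg_ball S r (u+t)" "dg_adj S v y" by auto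
    then show "y \<in> (\<lambda>x. x+t) ` dg_ball S (Suc r) u"
    proof cases
      case 1 then show ?thesis using Suc by auto
    next
      case 2
      then obtain v0 where v0: "v0 \<in> dg_ball S r u" "v = v0 + t" using Suc by auto
      have "dg_adj S v0 (y - t)" using 2 v0 adj_shift[of S v0 t "y-t"] by simp
      then have "y - t \<in> dg_ball S (Suc r) u" using v0 by auto
      then show ?thesis by (intro image_eqI[of _ _ "y-t"]) auto
    qed
  next
    fix y assume "y \<in> (\<lambda>x. x+t) ` dg_ball S (Suc r) u"
    then obtain z where z: "z \<in> dg_ball S (Suc r) u" "y = z + t" by auto
    then consider "z \<in> dg_ball S r u" | v where "v \<in> dg_ball S r u" "dg_adj S v z" by auto
    then show "y \<in> dg_ball S (Suc r) (u+t)"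
    proof cases
      case 1 then show ?thesis using Suc z by auto
    next
      case 2
      have "v + t \<in> dg_ball S r (u+t)" using Suc 2 by auto
      moreover have "dg_adj S (v+t) y" using 2 z adj_shift by simp
      ultimately show ?thesis by auto
    qed
  qed
qed

lemma ball_center: "u \<in> dg_ball S r u"
  by (induction r) auto

lemma ball_bound:
  assumes "finite S" "y \<in> dg_ball S r u"
  shows "\<bar>y - u\<bar> \<le> int (r * Max S)"
  using assms(2)
proof (induction r arbitrary: y)
  case 0 then show ?case by simp
next
  case (Suc r)
  then consider "y \<in> dg_ball S r u" | v where "v \<in> dg_ball S r u" "dg_adj S v y" by auto
  then show ?case
  proof cases
    case 1
    then have "\<bar>y - u\<bar> \<le> int (r * Max S)" using Suc.IH by blast
    then show ?thesis by simp
  next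
    case 2
    have "nat \<bar>v - y\<bar> \<in> S" using 2 by (simp add: dg_adj_def)
    then have "nat \<bar>v - y\<bar> \<le> Max S" using assms(1) by simp
    then have "\<bar>v - y\<bar> \<le> int (Max S)" by linarith
    moreover have "\<bar>v - u\<bar> \<le> int (r * Max S)" using Suc 2 by auto
    ultimately show ?thesis by (simp add: algebra_simps)
  qed
qed



definition win :: "int \<Rightarrow> int set \<Rightarrow> int \<Rightarrow> int set" where
  "win K A x = {j. 0 \<le> j \<and> j \<le> K \<and> x + j \<in> A}"

definition good :: "nat set \<Rightarrow> nat \<Rightarrow> int \<Rightarrow> int set \<Rightarrow> bool" where
  "good S r R w \<longleftrightarrow> w \<inter> dg_ball S r R \<noteq> {} \<and>
     (\<forall>d. 1 \<le> d \<and> d \<le> 2*R \<longrightarrow> w \<inter> dg_ball S r R \<noteq> w \<inter> dg_ball S r (R+d))"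

lemma win_ball:
  assumes "finite S" "R = int (r * Max S)" "K = 4*R" "0 \<le> e" "e \<le> 2*R"
  shows "A \<inter> dg_ball S r (x+R+e) = (\<lambda>j. j + x) ` (win K A x \<inter> dg_ball S r (R+e))"
proof -
  have b: "dg_ball S r (x+R+e) = (\<lambda>j. j + x) ` dg_ball S r (R+e)"
    using ball_shift[of S r "R+e" x] by (simp add: add.commute add.left_commute)
  show ?thesis
  proof (rule set_eqI, rule iffI)
    fix y assume y: "y \<in> A \<inter> dg_ball S r (x+R+e)"
    then obtain j where j: "j \<in> dg_ball S r (R+e)" "y = j + x" using b by auto
    have "\<bar>j - (R+e)\<bar> \<le> R" using ball_bound[OF assms(1) j(1)] assms(2) by simp
    then have "0 \<le> j" "j \<le> K" using assms by auto
    then show "y \<in> (\<lambda>j. j + x) ` (win K A x \<inter> dg_ball S r (R+e))"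
      using y j by (auto simp: win_def add.commute)
  next
    fix y assume "y \<in> (\<lambda>j. j + x) ` (win K A x \<inter> dg_ball S r (R+e))"
    then show "y \<in> A \<inter> dg_ball S r (x+R+e)" using b by (auto simp: win_def add.commute)
  qed
qed

lemma code_iff:
  assumes "finite S" "R = int (r * Max S)" "K = 4*R"
  shows "r_identifying_code S r A \<longleftrightarrow> (\<forall>x. good S r R (win K A x))"
proof
  have R0: "0 \<le> R" using assms by simp
  assume code: "r_identifying_code S r A"
  show "\<forall>x. good S r R (win K A x)"
  proof
    fix x
    have e0: "A \<inter> dg_ball S r (x+R) = (\<lambda>j. j + x) ` (win K A x \<inter> dg_ball S r R)"
      using win_ball[OF assms, of 0 A x] R0 by simp
    have "A \<inter> dg_ball S r (x+R) \<noteq> {}" using code unfolding r_identifying_code_def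
      by (metis add.commute less_add_one order_less_irrefl)
    then have ne: "win K A x \<inter> dg_ball S r R \<noteq> {}" using e0 by auto
    have "win K A x \<inter> dg_ball S r R \<noteq> win K A x \<inter> dg_ball S r (R+d)" if d: "1 \<le> d" "d \<le> 2*R" for d
    proof
      assume eq: "win K A x \<inter> dg_ball S r R = win K A x \<inter> dg_ball S r (R+d)"
      have "A \<inter> dg_ball S r (x+R+d) = (\<lambda>j. j + x) ` (win K A x \<inter> dg_ball S r (R+d))"
        using win_ball[OF assms, of d A x] d by simp
      then have "A \<inter> dg_ball S r (x+R) = A \<inter> dg_ball S r (x+R+d)" using e0 eq by simp
      moreover have "x + R \<noteq> x+R+d" using d by simp
      ultimately show False using code unfolding r_identifying_code_def by blast
    qed
    then show "good S r R (win K A x)" using ne unfolding good_def by blast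
  qed
next
  have R0: "0 \<le> R" using assms by simp
  assume G: "\<forall>x. good S r R (win K A x)"
  have ne: "A \<inter> dg_ball S r u \<noteq> {}" for u
  proof -
    have "A \<inter> dg_ball S r ((u-R)+R+0) = (\<lambda>j. j + (u-R)) ` (win K A (u-R) \<inter> dg_ball S r (R+0))"
      using win_ball[OF assms, of 0 A "u-R"] R0 by simp
    then show ?thesis using G unfolding good_def by auto
  qed
  have dist: "A \<inter> dg_ball S r u \<noteq> A \<inter> dg_ball S r v" if uv: "u < v" for u v
  proof (cases "v - u \<le> 2*R")
    case True
    define x where "x = u - R"
    have e0: "A \<inter> dg_ball S r (x+R+0) = (\<lambda>j. j + x) ` (win K A x \<inter> dg_ball S r (R+0))"
      using win_ball[OF assms, of 0 A x] R0 by simp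
    have e1: "A \<inter> dg_ball S r (x+R+(v-u)) = (\<lambda>j. j + x) ` (win K A x \<inter> dg_ball S r (R+(v-u)))"
      using win_ball[OF assms, of "v-u" A x] True uv by simp
    have "win K A x \<inter> dg_ball S r R \<noteq> win K A x \<inter> dg_ball S r (R+(v-u))"
      using G True uv unfolding good_def by auto
    moreover have "inj (\<lambda>j::int. j + x)" by (simp add: inj_def)
    ultimately have "A \<inter> dg_ball S r (x+R+0) \<noteq> A \<inter> dg_ball S r (x+R+(v-u))"
      using e0 e1 by (simp add: inj_image_eq_iff)
    then show ?thesis by (simp add: x_def)
  next
    case False
    obtain y where y: "y \<in> A \<inter> dg_ball S r u" using ne by blast
    show ?thesis
    proof
      assume "A \<inter> dg_ball S r u = A \<inter> dg_ball S r v"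
      then have "y \<in> dg_ball S r v" using y by blast
      then have "\<bar>y - v\<bar> \<le> R" using ball_bound[OF assms(1)] assms(2) by simp
      moreover have "\<bar>y - u\<bar> \<le> R" using ball_bound[OF assms(1)] assms(2) y by simp
      ultimately show False using False by simp
    qed
  qed
  show "r_identifying_code S r A"
    unfolding r_identifying_code_def
    using ne dist by (metis linorder_neqE)
qed



lemma walk_bound:
  fixes c :: "'a \<Rightarrow> real" and \<mu> :: real
  assumes fin: "finite V" and cardV: "card V \<le> n" and mu: "0 \<le> \<mu>" and cpos: "\<forall>x. 0 \<le> c x"
    and cyc: "\<And>cs. cs \<noteq> [] \<Longrightarrow> length cs \<le> n \<Longrightarrow> set cs \<subseteq> V \<Longrightarrow> successively E cs
              \<Longrightarrow> E (last cs) (hd cs) \<Longrightarrow> \<mu> * real (length cs) \<le> sum_list (map c cs)"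
  shows "set ws \<subseteq> V \<Longrightarrow> successively E ws \<Longrightarrow> \<mu> * (real (length ws) - real n) \<le> sum_list (map c ws)"
proof (induction "length ws" arbitrary: ws rule: less_induct)
  case less
  have s0: "0 \<le> sum_list (map c ws)" using cpos by (induction ws) auto
  show ?case
  proof (cases "length ws \<le> n")
    case True
    then have "\<mu> * (real (length ws) - real n) \<le> 0" using mu by (simp add: mult_nonneg_nonpos)
    then show ?thesis using s0 by linarith
  next
    case False
    define p where "p = take (Suc n) ws"
    have lp: "length p = Suc n" using False by (simp add: p_def)
    have "set p \<subseteq> V" using less.prems(1) p_def by (meson order_trans set_take_subset)
    then have "card (set p) \<le> n" using cardV fin by (meson card_mono order_trans)
    then have "\<not> distinct p" using lp distinct_card by fastforce
    then obtain xs y ys zs where pd: "p = xs@[y]@ys@[y]@zs" using not_distinct_decomp by blast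
    define rest where "rest = drop (Suc n) ws"
    define T where "T = y # zs @ rest"
    define cs where "cs = y # ys"
    have wsd: "ws = xs @ cs @ T" using pd unfolding cs_def T_def rest_def
      by (metis append_Cons append_assoc append_take_drop_id p_def self_append_conv2)
    have lcs: "length cs \<le> n" using lp pd cs_def by simp
    have sw: "successively E ws" by fact
    have s1: "successively E xs" "successively E (cs @ T)" "xs = [] \<or> E (last xs) y"
      using sw[unfolded wsd] by (auto simp: successively_append_iff cs_def)
    have s2: "successively E cs" "successively E T" "E (last cs) y"
      using s1(2) successively_append_iff[of E cs T] by (auto simp: cs_def T_def)
    have hcs: "hd cs = y" by (simp add: cs_def)
    have C: "\<mu> * real (length cs) \<le> sum_list (map c cs)"
      using cyc[of cs] s2 lcs less.prems(1) wsd hcs by (auto simp: cs_def)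
    define ws' where "ws' = xs @ T"
    have sw': "successively E ws'" using s1 s2 unfolding ws'_def
      by (auto simp: successively_append_iff T_def)
    have lt: "length ws' < length ws" using wsd ws'_def cs_def by simp
    have "set ws' \<subseteq> V" using less.prems(1) wsd ws'_def by auto
    then have IH: "\<mu> * (real (length ws') - real n) \<le> sum_list (map c ws')"
      using less.hyps[OF lt] sw' by blast
    have "length ws = length ws' + length cs" using wsd ws'_def by simp
    moreover have "sum_list (map c ws) = sum_list (map c ws') + sum_list (map c cs)"
      using wsd ws'_def by simp
    ultimately show ?thesis using IH C by (simp add: algebra_simps)
  qed
qed



definition shiftE :: "int \<Rightarrow> int set \<Rightarrow> int set \<Rightarrow> bool" where
  "shiftE K w w' \<longleftrightarrow> (\<forall>j. 0 \<le> j \<and> j < K \<longrightarrow> (j+1 \<in> w \<longleftrightarrow> j \<in> w'))"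

lemma win_step: "shiftE K (win K A x) (win K A (x+1))"
  by (auto simp: shiftE_def win_def add_ac)

lemma closed_nth:
  assumes "cs \<noteq> []" "successively E cs" "E (last cs) (hd cs)" "t < length cs"
  shows "E (cs ! t) (cs ! (Suc t mod length cs))"
proof (cases "Suc t < length cs")
  case True then show ?thesis using assms successively_nth by simp
next
  case False
  then have "Suc t = length cs" using assms by simp
  then have "t = length cs - 1" by simp
  then show ?thesis using assms \<open>Suc t = length cs\<close> by (simp add: last_conv_nth hd_conv_nth)
qed

lemma nat_mod_step:
  assumes "0 < p"
  shows "nat ((y+1) mod int p) = Suc (nat (y mod int p)) mod p"
proof -
  have "(y+1) mod int p = (y mod int p + 1) mod int p" by (simp add: mod_add_left_eq)
  moreover have "y mod int p \<ge> 0" using assms by simp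
  ultimately show ?thesis using assms
    by (metis Suc_eq_plus1 nat_int nat_mod_distrib int_ops(4) mod_pos_pos_trivial nat_0_le of_nat_0_le_iff of_nat_less_0_iff zmod_int pos_mod_sign)
qed

locale cyc =
  fixes K :: int and cs :: "int set list"
  assumes K0: "0 \<le> K" and ne: "cs \<noteq> []" and sub: "\<forall>w\<in>set cs. w \<subseteq> {0..K}"
    and succ: "successively (shiftE K) cs" and cl: "shiftE K (last cs) (hd cs)"
begin

definition f :: "int \<Rightarrow> int set" where "f y = cs ! nat (y mod int (length cs))"
definition P :: "int set" where "P = {y. 0 \<in> f y}"

lemma lpos: "0 < length cs" using ne by simp

lemma f_in: "f y \<in> set cs"
proof -
  have "nat (y mod int (length cs)) < length cs" using lpos
    by (metis nat_less_iff of_nat_0_less_iff pos_mod_bound pos_mod_sign)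
  then show ?thesis by (simp add: f_def)
qed

lemma f_step: "shiftE K (f y) (f (y+1))"
proof -
  have t: "nat (y mod int (length cs)) < length cs" using lpos
    by (metis nat_less_iff of_nat_0_less_iff pos_mod_bound pos_mod_sign)
  show ?thesis unfolding f_def nat_mod_step[OF lpos]
    using closed_nth[OF ne succ cl t] .
qed

lemma f_per: "f (y + int (length cs)) = f y"
  by (simp add: f_def)

lemma f_shift: "0 \<le> int j \<Longrightarrow> int j \<le> K \<Longrightarrow> (int j \<in> f y \<longleftrightarrow> 0 \<in> f (y + int j))"
proof (induction j arbitrary: y)
  case 0 then show ?case by simp
next
  case (Suc j)
  have "int j < K" using Suc.prems by simp
  then have h: "(int j + 1 \<in> f y) = (int j \<in> f (y+1))"
    using f_step[of y] unfolding shiftE_def by simp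
  have "int (Suc j) \<in> f y \<longleftrightarrow> int j \<in> f (y+1)"
    using h by (simp add: add.commute)
  also have "\<dots> \<longleftrightarrow> 0 \<in> f (y + 1 + int j)" using Suc by simp
  finally show ?case by (simp add: add_ac)
qed

lemma win_P: "win K P x = f x"
proof (rule set_eqI)
  fix j
  show "j \<in> win K P x \<longleftrightarrow> j \<in> f x"
  proof (cases "0 \<le> j \<and> j \<le> K")
    case True
    then obtain n where n: "j = int n" by (metis nonneg_int_cases)
    show ?thesis using True f_shift[of n x] n by (simp add: win_def P_def)
  next
    case False
    have "f x \<subseteq> {0..K}" using sub f_in by blast
    then show ?thesis using False by (auto simp: win_def)
  qed
qed

lemma per_P: "periodic_with P (length cs)"
  unfolding periodic_with_def
proof (rule set_eqI, rule iffI)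
  fix y assume "y \<in> (\<lambda>x. x + int (length cs)) ` P"
  then show "y \<in> P" by (auto simp: P_def f_per)
next
  fix y assume "y \<in> P"
  then have "y - int (length cs) \<in> P" using f_per[of "y - int (length cs)"] by (simp add: P_def)
  then show "y \<in> (\<lambda>x. x + int (length cs)) ` P" by (intro image_eqI[of _ _ "y - int (length cs)"]) auto
qed

end



definition cw :: "int set \<Rightarrow> real" where "cw w = (if 0 \<in> w then 1 else 0)"

lemma cw_nonneg: "0 \<le> cw w" by (simp add: cw_def)

lemma card_sum:
  "real (card (A \<inter> {- int N .. int N})) = (\<Sum>t<2*N+1. if int t - int N \<in> A then 1 else 0)"
proof -
  define T where "T = {t \<in> {..<2*N+1}. int t - int N \<in> A}"
  have img: "A \<inter> {- int N .. int N} = (\<lambda>t. int t - int N) ` T"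
  proof (rule set_eqI, rule iffI)
    fix y assume y: "y \<in> A \<inter> {- int N .. int N}"
    then have "nat (y + int N) \<in> T" by (auto simp: T_def)
    moreover have "y = int (nat (y + int N)) - int N" using y by auto
    ultimately show "y \<in> (\<lambda>t. int t - int N) ` T" by blast
  qed (auto simp: T_def)
  have "inj_on (\<lambda>t. int t - int N) T" by (auto simp: inj_on_def)
  then have "card (A \<inter> {- int N .. int N}) = card T" using img card_image by metis
  also have "real (card T) = (\<Sum>t<2*N+1. if int t - int N \<in> A then 1 else 0)"
  proof -
    have "(\<Sum>t<2*N+1. if int t - int N \<in> A then 1 else 0) = sum (\<lambda>_. 1::real) T"
      unfolding T_def by (rule sum.inter_filter[symmetric]) simp
    then show ?thesis by simp
  qed
  finally show ?thesis .
qed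

lemma per_sum_mult:
  fixes h :: "nat \<Rightarrow> real"
  assumes per: "\<And>t. h (t + p) = h t"
  shows "sum h {..<p*q} = q * sum h {..<p}"
proof (induction q)
  case 0 then show ?case by simp
next
  case (Suc q)
  have hq: "h (i + p*q) = h i" for i
  proof (induction q)
    case 0 then show ?case by simp
  next
    case (Suc q)
    have "h (i + p*Suc q) = h ((i+p*q)+p)" by (simp add: algebra_simps)
    also have "\<dots> = h (i + p*q)" by (rule per)
    finally show ?case using Suc by simp
  qed
  have "sum h {..<p * Suc q} = sum h {..<p*q} + sum h {p*q..<p*q+p}"
    by (simp add: lessThan_atLeast0 sum.atLeastLessThan_concat add.commute)
  also have "sum h {p*q..<p*q+p} = sum (\<lambda>i. h (i + p*q)) {0..<p}"
    using sum.shift_bounds_nat_ivl[of h 0 "p*q" p] by (simp add: add.commute)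
  also have "\<dots> = sum h {..<p}" by (simp add: hq lessThan_atLeast0)
  finally show ?case using Suc by (simp add: algebra_simps)
qed

lemma per_sum_bound:
  fixes h :: "nat \<Rightarrow> real"
  assumes per: "\<And>t. h (t + p) = h t" and pos: "\<And>t. 0 \<le> h t" and p: "0 < p"
  shows "sum h {..<L} \<le> real L / real p * sum h {..<p} + sum h {..<p}"
proof -
  have m: "L mod p < p" using p by simp
  have e: "p * (L div p) + L mod p = L" by (rule mult_div_mod_eq)
  have e2: "p * (L div p + 1) = p * (L div p) + p" by simp
  have L: "L \<le> p * (L div p + 1)" unfolding e2 using m e by linarith
  have sub: "{..<L} \<subseteq> {..<p * (L div p + 1)}" using L by auto
  have "sum h {..<L} \<le> sum h {..<p * (L div p + 1)}"
    by (rule sum_mono2[OF _ sub]) (simp_all add: pos)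
  also have "\<dots> = real (L div p + 1) * sum h {..<p}" using per_sum_mult[of h p, OF per] by blast
  also have "\<dots> \<le> (real L / real p + 1) * sum h {..<p}"
  proof (rule mult_right_mono)
    show "0 \<le> sum h {..<p}" using pos by (simp add: sum_nonneg)
    have "real (L div p) \<le> real L / real p" by (rule of_nat_div_le_of_nat)
    then show "real (L div p + 1) \<le> real L / real p + 1" by simp
  qed
  finally show ?thesis by (simp add: algebra_simps)
qed

context cyc
begin

lemma bij_mod:
  "bij_betw (\<lambda>t. nat ((int t + a) mod int (length cs))) {..<length cs} {..<length cs}"
proof -
  let ?p = "length cs"
  let ?g = "\<lambda>t. nat ((int t + a) mod int ?p)"
  have pp: "0 < int ?p" using lpos by simp
  have im: "?g ` {..<?p} \<subseteq> {..<?p}"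
  proof
    fix y assume "y \<in> ?g ` {..<?p}"
    then obtain t where y: "y = ?g t" by blast
    have "(int t + a) mod int ?p < int ?p" "0 \<le> (int t + a) mod int ?p"
      using pp by (simp_all only: pos_mod_bound pos_mod_sign)
    then show "y \<in> {..<?p}" using y by simp
  qed
  have inj: "inj_on ?g {..<?p}"
  proof (rule inj_onI)
    fix s t assume s: "s \<in> {..<?p}" and t: "t \<in> {..<?p}" and e: "?g s = ?g t"
    have "0 \<le> (int s + a) mod int ?p" "0 \<le> (int t + a) mod int ?p"
      using pp by (simp_all only: pos_mod_sign)
    then have e1: "(int s + a) mod int ?p = (int t + a) mod int ?p" using e by simp
    have "int s mod int ?p = ((int s + a) + (- a)) mod int ?p" by simp
    also have "\<dots> = (((int s + a) mod int ?p) + (- a)) mod int ?p" by (rule mod_add_left_eq[symmetric])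
    also have "\<dots> = (((int t + a) mod int ?p) + (- a)) mod int ?p" by (simp only: e1)
    also have "\<dots> = ((int t + a) + (- a)) mod int ?p" by (rule mod_add_left_eq)
    also have "\<dots> = int t mod int ?p" by simp
    finally have "int s mod int ?p = int t mod int ?p" .
    moreover have "int s mod int ?p = int s" "int t mod int ?p = int t" using s t by simp_all
    ultimately show "s = t" by simp
  qed
  show ?thesis unfolding bij_betw_def using endo_inj_surj[OF _ im inj] inj by simp
qed

lemma period_sum: "(\<Sum>t<length cs. cw (f (int t + a))) = sum_list (map cw cs)"
proof -
  have "(\<Sum>t<length cs. cw (f (int t + a))) = (\<Sum>t<length cs. cw (cs ! nat ((int t + a) mod int (length cs))))"
    by (simp add: f_def)
  also have "\<dots> = (\<Sum>i<length cs. cw (cs ! i))"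
    using sum.reindex_bij_betw[OF bij_mod, of "\<lambda>i. cw (cs ! i)" a] .
  also have "\<dots> = sum_list (map cw cs)"
    by (simp add: sum_list_sum_nth lessThan_atLeast0)
  finally show ?thesis .
qed

lemma P_count:
  "real (card (P \<inter> {- int N .. int N})) \<le> real (2*N+1) / real (length cs) * sum_list (map cw cs) + sum_list (map cw cs)"
proof -
  define h where "h t = cw (f (int t - int N))" for t
  have e1: "real (card (P \<inter> {- int N .. int N})) = sum h {..<2*N+1}"
    unfolding card_sum h_def by (simp add: P_def cw_def)
  have per: "h (t + length cs) = h t" for t
  proof -
    have "int (t + length cs) - int N = (int t - int N) + int (length cs)" by simp
    then show ?thesis unfolding h_def using f_per[of "int t - int N"] by metis
  qed
  have e2: "sum h {..<length cs} = sum_list (map cw cs)"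
    using period_sum[of "- int N"] unfolding h_def by simp
  have b: "sum h {..<2*N+1} \<le> real (2*N+1) / real (length cs) * sum h {..<length cs} + sum h {..<length cs}"
    by (rule per_sum_bound[of h "length cs" "2*N+1", OF per]) (auto simp: h_def cw_nonneg lpos ne)
  show ?thesis using b unfolding e1 e2 .
qed

end



lemma inv_lim: "((\<lambda>N. c / (2 * real N + 1)) \<longlongrightarrow> (0::real)) sequentially"
proof -
  have "filterlim (\<lambda>N. 1 + 2 * real N) at_top sequentially"
    by (intro filterlim_tendsto_add_at_top[OF tendsto_const] filterlim_tendsto_pos_mult_at_top[OF tendsto_const] filterlim_real_sequentially) simp
  then have "filterlim (\<lambda>N. 2 * real N + 1) at_infinity sequentially"
    by (simp add: add.commute filterlim_at_top_imp_at_infinity)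
  then show ?thesis by (intro tendsto_divide_0[OF tendsto_const])
qed

lemma limsup_le:
  assumes "\<And>N. X N \<le> \<mu> + c / (2 * real N + 1)"
  shows "limsup (\<lambda>N. ereal (X N)) \<le> ereal \<mu>"
proof -
  have "((\<lambda>N. \<mu> + c / (2 * real N + 1)) \<longlongrightarrow> \<mu>) sequentially" using tendsto_add[OF tendsto_const inv_lim] tendsto_diff[OF tendsto_const inv_lim] by auto
  then have "((\<lambda>N. ereal (\<mu> + c / (2 * real N + 1))) \<longlongrightarrow> ereal \<mu>) sequentially" by (simp add: lim_ereal)
  then have L: "limsup (\<lambda>N. ereal (\<mu> + c / (2 * real N + 1))) = ereal \<mu>"
    by (intro lim_imp_Limsup) simp_all
  have "limsup (\<lambda>N. ereal (X N)) \<le> limsup (\<lambda>N. ereal (\<mu> + c / (2 * real N + 1)))"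
    by (rule Limsup_mono) (simp add: assms)
  then show ?thesis using L by simp
qed

lemma limsup_ge:
  assumes "\<And>N. \<mu> - c / (2 * real N + 1) \<le> X N"
  shows "ereal \<mu> \<le> limsup (\<lambda>N. ereal (X N))"
proof -
  have "((\<lambda>N. \<mu> - c / (2 * real N + 1)) \<longlongrightarrow> \<mu>) sequentially" using tendsto_add[OF tendsto_const inv_lim] tendsto_diff[OF tendsto_const inv_lim] by auto
  then have "((\<lambda>N. ereal (\<mu> - c / (2 * real N + 1))) \<longlongrightarrow> ereal \<mu>) sequentially" by (simp add: lim_ereal)
  then have L: "limsup (\<lambda>N. ereal (\<mu> - c / (2 * real N + 1))) = ereal \<mu>"
    by (intro lim_imp_Limsup) simp_all
  have "limsup (\<lambda>N. ereal (\<mu> - c / (2 * real N + 1))) \<le> limsup (\<lambda>N. ereal (X N))"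
    by (rule Limsup_mono) (simp add: assms)
  then show ?thesis using L by simp
qed


lemma div_up: fixes x d \<mu> W :: real shows "0 < d \<Longrightarrow> x \<le> \<mu>*d + W \<Longrightarrow> x/d \<le> \<mu> + W/d"
  by (simp add: field_simps)
lemma div_lo: fixes x d \<mu> c :: real assumes "0 < d" "\<mu>*d - c \<le> x" shows "\<mu> - c/d \<le> x/d"
proof -
  have "\<mu> - c/d = (\<mu>*d - c)/d" using assms(1) by (simp add: field_simps)
  also have "\<dots> \<le> x/d" using assms by (intro divide_right_mono) auto
  finally show ?thesis .
qed


lemma univ_code:
  assumes "finite S"
  shows "r_identifying_code S r UNIV"
proof -
  have fin: "finite (dg_ball S r u)" for u
  proof -
    have "dg_ball S r u \<subseteq> {u - int (r * Max S) .. u + int (r * Max S)}"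
      using ball_bound[OF assms] by (force simp: abs_le_iff)
    then show ?thesis by (rule finite_subset) simp
  qed
  have le: "v \<le> u" if eq: "dg_ball S r u = dg_ball S r v" for u v
  proof -
    define M where "M = Max (dg_ball S r u)"
    have "dg_ball S r u \<noteq> {}" using ball_center[of u S r] by blast
    then have M: "M \<in> dg_ball S r u" unfolding M_def using fin Max_in by blast
    have "dg_ball S r v = (\<lambda>x. x + (v - u)) ` dg_ball S r u"
      using ball_shift[of S r u "v-u"] by simp
    then have "M + (v - u) \<in> dg_ball S r u" using eq M by auto
    then have "M + (v - u) \<le> M" unfolding M_def by (rule Max_ge[OF fin])
    then show ?thesis by simp
  qed
  show ?thesis unfolding r_identifying_code_def
    using ball_center le by (metis Int_UNIV_left antisym empty_iff)
qed

theorem corollary6: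
  fixes S :: "nat set" and r :: nat
  assumes "finite S" and "S \<noteq> {}" and "\<forall>x\<in>S. x > 0" and "r \<ge> 1"
  shows "\<exists>A p. p > 0 \<and> p \<le> (6 * Max S * r) * 2 ^ (6 * Max S * r) \<and> periodic_with A p
           \<and> r_identifying_code S r A
           \<and> (\<forall>B. r_identifying_code S r B \<longrightarrow> density A \<le> density B)"
proof -
  define s where "s = Max S"
  have "s \<in> S" unfolding s_def using assms(1,2) by (rule Max_in)
  then have s1: "s \<ge> 1" using assms(3) by (simp add: Suc_le_eq)
  define R where "R = int (r * s)"
  define K where "K = 4 * R"
  have rs1: "1 \<le> r * s" using s1 assms(4) by (metis mult_le_mono nat_mult_1)
  then have R1: "R \<ge> 1" unfolding R_def by linarith
  have K0: "0 \<le> K" using R1 K_def by simp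
  have ci: "r_identifying_code S r A \<longleftrightarrow> (\<forall>x. good S r R (win K A x))" for A
    using code_iff[OF assms(1) R_def[unfolded s_def] K_def] .
  define V where "V = {w. w \<subseteq> {0..K} \<and> good S r R w}"
  define n :: nat where "n = 2 ^ (4 * r * s + 1)"
  have finV: "finite V" unfolding V_def
    by (rule finite_subset[of _ "Pow {0..K}"]) auto
  have K1: "K + 1 = int (4 * r * s + 1)" unfolding K_def R_def by simp
  have "card V \<le> card (Pow {0..K})" unfolding V_def by (rule card_mono) auto
  also have "card (Pow {0..K}) = 2 ^ nat (K + 1)" by (simp add: card_Pow)
  also have "nat (K + 1) = 4 * r * s + 1" by (simp only: K1 nat_int)
  finally have cardV: "card V \<le> n" unfolding n_def .
  have winV: "win K A x \<in> V" if "r_identifying_code S r A" for A x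
  proof -
    have "good S r R (win K A x)" using that ci by blast
    moreover have "win K A x \<subseteq> {0..K}" by (auto simp: win_def)
    ultimately show ?thesis by (simp add: V_def)
  qed
  define C where "C = {cs. cs \<noteq> [] \<and> length cs \<le> n \<and> set cs \<subseteq> V \<and> successively (shiftE K) cs
                          \<and> shiftE K (last cs) (hd cs)}"
  have finC: "finite C"
    by (rule finite_subset[OF _ finite_lists_length_le[OF finV, of n]]) (auto simp: C_def)
  have full: "win K UNIV 0 = {0..K}" by (auto simp: win_def)
  have fullV: "{0..K} \<in> V" using winV[OF univ_code[OF assms(1)], of 0] full by simp
  have n1: "1 \<le> n" unfolding n_def by simp
  have "[{0..K}] \<in> C" using fullV n1 unfolding C_def by (auto simp: shiftE_def)
  then have neC: "C \<noteq> {}" by blast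
  define ratio where "ratio cs = sum_list (map cw cs) / real (length cs)" for cs
  define \<mu> where "\<mu> = Min (ratio ` C)"
  have "\<mu> \<in> ratio ` C" unfolding \<mu>_def using finC neC by (intro Min_in) auto
  then obtain cs0 where cs0: "cs0 \<in> C" "ratio cs0 = \<mu>" by auto
  have mule: "\<mu> \<le> ratio cs" if "cs \<in> C" for cs
    unfolding \<mu>_def by (rule Min_le) (use finC that in auto)
  have cwsum_nonneg: "0 \<le> sum_list (map cw cs)" for cs
    by (induction cs) (auto simp: cw_nonneg)
  have mu0: "0 \<le> \<mu>" using cs0(2)[symmetric] cwsum_nonneg[of cs0] unfolding ratio_def by simp
  have cycb: "\<mu> * real (length cs) \<le> sum_list (map cw cs)" if "cs \<in> C" for cs
  proof -
    have "length cs > 0" using that unfolding C_def by simp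
    then show ?thesis using mule[OF that] unfolding ratio_def by (simp add: field_simps)
  qed
  have cycC: "\<And>cs. cs \<noteq> [] \<Longrightarrow> length cs \<le> n \<Longrightarrow> set cs \<subseteq> V \<Longrightarrow> successively (shiftE K) cs
              \<Longrightarrow> shiftE K (last cs) (hd cs) \<Longrightarrow> \<mu> * real (length cs) \<le> sum_list (map cw cs)"
    using cycb unfolding C_def by blast
  have cs0p: "cs0 \<noteq> []" "set cs0 \<subseteq> V" "successively (shiftE K) cs0" "shiftE K (last cs0) (hd cs0)"
    "length cs0 \<le> n"
    using cs0 unfolding C_def by auto
  interpret cy: cyc K cs0
    using K0 cs0p unfolding V_def by unfold_locales auto
  define p where "p = length cs0"
  define W where "W = sum_list (map cw cs0)"
  have p0: "0 < p" using cs0p p_def by simp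
  have W: "W = \<mu> * real p" using cs0(2) p0 unfolding ratio_def W_def p_def by (simp add: field_simps)
  have pbound: "p \<le> (6 * Max S * r) * 2 ^ (6 * Max S * r)"
  proof -
    have e: "6*s*r = 6*(r*s)" "4*r*s = 4*(r*s)" by simp_all
    have le: "4 * r * s + 1 \<le> 6 * s * r" unfolding e using rs1 by linarith
    have one: "1 \<le> 6 * s * r" unfolding e using rs1 by linarith
    have "p \<le> 2 ^ (4 * r * s + 1)" using cs0p p_def n_def by simp
    also have "(2::nat) ^ (4 * r * s + 1) \<le> 2 ^ (6 * s * r)"
      by (rule power_increasing[OF le]) simp
    also have "\<dots> \<le> (6 * s * r) * 2 ^ (6 * s * r)"
      using mult_le_mono1[OF one, of "2 ^ (6 * s * r)"] by simp
    finally show ?thesis unfolding s_def .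
  qed
  have codeP: "r_identifying_code S r cy.P"
    unfolding ci
  proof
    fix x
    have "cy.f x \<in> V" using cy.f_in cs0p by blast
    then show "good S r R (win K cy.P x)" unfolding cy.win_P V_def by simp
  qed
  have densP: "density cy.P \<le> ereal \<mu>"
    unfolding density_def
  proof (rule limsup_le[where c = W])
    fix N
    have "real (card (cy.P \<inter> {- int N .. int N})) \<le> real (2*N+1) / real p * W + W"
      using cy.P_count[of N] unfolding W_def p_def .
    also have "\<dots> = \<mu> * (2 * real N + 1) + W" using W p0 by simp
    finally have "real (card (cy.P \<inter> {- int N .. int N})) \<le> \<mu> * (2 * real N + 1) + W" .
    then show "real (card (cy.P \<inter> {- int N .. int N})) / (2 * real N + 1) \<le> \<mu> + W / (2 * real N + 1)"
      by (intro div_up) auto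
  qed
  have densB: "ereal \<mu> \<le> density B" if codeB: "r_identifying_code S r B" for B
    unfolding density_def
  proof (rule limsup_ge[where c = "\<mu> * real n"])
    fix N
    define ws where "ws = map (\<lambda>t. win K B (int t - int N)) [0..<2*N+1]"
    have setws: "set ws \<subseteq> V" using winV[OF codeB] unfolding ws_def by auto
    have succ: "successively (shiftE K) ws"
      unfolding successively_conv_nth ws_def
    proof (intro allI impI)
      fix i assume "Suc i < length (map (\<lambda>t. win K B (int t - int N)) [0..<2*N+1])"
      then have i: "Suc i < 2*N+1" by simp
      have eq: "1 + int i - int N = (int i - int N) + 1" by simp
      then show "shiftE K (map (\<lambda>t. win K B (int t - int N)) [0..<2*N+1] ! i)
                   (map (\<lambda>t. win K B (int t - int N)) [0..<2*N+1] ! Suc i)"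
        using i win_step[of K B "int i - int N"] by (simp del: upt_Suc add: eq)
    qed
    have cpos: "\<forall>x. 0 \<le> cw x" using cw_nonneg by blast
    have wb: "\<mu> * (real (length ws) - real n) \<le> sum_list (map cw ws)"
      by (rule walk_bound[OF finV cardV mu0 cpos cycC setws succ])
    have "sum_list (map cw ws) = (\<Sum>t\<in>{0..<2*N+1}. cw (win K B (int t - int N)))"
      unfolding ws_def by (simp add: sum_set_upt_conv_sum_list_nat[symmetric] comp_def)
    also have "\<dots> = real (card (B \<inter> {- int N .. int N}))"
      unfolding card_sum using K0 by (simp add: cw_def win_def lessThan_atLeast0)
    finally have "\<mu> * (2 * real N + 1) - \<mu> * real n \<le> real (card (B \<inter> {- int N .. int N}))"
      using wb unfolding ws_def by (simp add: algebra_simps)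
    then show "\<mu> - \<mu> * real n / (2 * real N + 1) \<le> real (card (B \<inter> {- int N .. int N})) / (2 * real N + 1)"
      by (intro div_lo) auto
  qed
  have "\<forall>B. r_identifying_code S r B \<longrightarrow> density cy.P \<le> density B"
    using densP densB order_trans by blast
  then show ?thesis using p0 pbound cy.per_P codeP unfolding p_def by blast
qed


end
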